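(* Let $G$ be a connected graph on $n$ vertices with distance matrix $D$. (i) If $G$ is not distance exceptional and $\kappa=D^+(n\vec 1)$, where $D^+$ is the Moore–Penrose inverse of $D$, then $\iota(G)=\dfrac{n}{\vec 1^\top\kappa}\in\mathbb{R}\cup\{\infty\}$ (with $n/0=\infty$). (ii) Let $\lambda_1\le\dots\le\lambda_n$ be the eigenvalues of $D$ with an orthonormal set of corresponding eigenvectors $\vec u_1,\dots,\vec u_n$. Then $$\iota(G)^{-1}=\sum_{i=1}^n\frac{(\vec u_i^\top\vec 1)^2}{\lambda_i}\in\mathbb{R}\cup\{\infty\},$$ interpreted as an extended real expression with the conventions $1/\infty=0$, $1/0=\infty$, $0/0=0$.
   Context: For a connected graph $G$ on vertices $v_1,\dots,v_n$, its distance matrix is $D=(d(v_i,v_j))_{i,j=1}^n$, where $d$ is the shortest-path distance; $\vec 1$ denotes the all-ones vector. $G$ is distance exceptional if $D\vec x=\vec 1$ has no solution. A curvature potential is a vector $\vec x$ with $D\vec x=\vec 1$. Curvature index $\iota(G)\in\mathbb{R}\cup\{\infty\}$: if $G$ is distance exceptional or has a curvature potential $\vec x$ with $\vec 1^\top\vec x\neq0$, then $\iota(G)$ is the unique real number with $\{D\vec x:\vec 1^\top\vec x=1\}\cap\mathbb{R}\vec 1=\{\iota(G)\vec 1\}$ (this intersection is a single point); otherwise (curvature potentials exist and all have $\vec 1^\top\vec x=0$) $\iota(G)=\infty$. *)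

theory Defs
  imports "HOL-Analysis.Analysis"
begin

text \<open>Simple graphs: vertex set = the finite type 'n (so n = CARD('n)),
  edges given by a symmetric irreflexive relation E.\<close>

definition simple_graph :: "('n \<Rightarrow> 'n \<Rightarrow> bool) \<Rightarrow> bool" where
  "simple_graph E \<longleftrightarrow> (\<forall>u v. E u v \<longrightarrow> E v u) \<and> (\<forall>u. \<not> E u u)"

definition walk :: "('n \<Rightarrow> 'n \<Rightarrow> bool) \<Rightarrow> 'n list \<Rightarrow> bool" where
  "walk E xs \<longleftrightarrow> xs \<noteq> [] \<and> (\<forall>i. Suc i < length xs \<longrightarrow> E (xs ! i) (xs ! Suc i))"

definition graph_connected :: "('n \<Rightarrow> 'n \<Rightarrow> bool) \<Rightarrow> bool" where
  "graph_connected E \<longleftrightarrow> (\<forall>u v. \<exists>xs. walk E xs \<and> hd xs = u \<and> last xs = v)"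

definition gdist :: "('n \<Rightarrow> 'n \<Rightarrow> bool) \<Rightarrow> 'n \<Rightarrow> 'n \<Rightarrow> nat" where
  "gdist E u v = (LEAST k. \<exists>xs. walk E xs \<and> hd xs = u \<and> last xs = v \<and> length xs = Suc k)"

definition dist_matrix :: "('n::finite \<Rightarrow> 'n \<Rightarrow> bool) \<Rightarrow> real^'n^'n" where
  "dist_matrix E = (\<chi> i j. real (gdist E i j))"

definition ones :: "real^'n" where
  "ones = (\<chi> i. 1)"

definition distance_exceptional :: "('n::finite \<Rightarrow> 'n \<Rightarrow> bool) \<Rightarrow> bool" where
  "distance_exceptional E \<longleftrightarrow> \<not> (\<exists>x. dist_matrix E *v x = ones)"

definition curvature_index :: "('n::finite \<Rightarrow> 'n \<Rightarrow> bool) \<Rightarrow> ereal" where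
  "curvature_index E =
     (if distance_exceptional E \<or> (\<exists>x. dist_matrix E *v x = ones \<and> ones \<bullet> x \<noteq> 0)
      then ereal (THE t. {dist_matrix E *v x | x. ones \<bullet> x = 1} \<inter> {c *\<^sub>R ones | c. True}
                          = {t *\<^sub>R ones})
      else PInfty)"

definition moore_penrose :: "real^'n^'m \<Rightarrow> real^'m^'n" where
  "moore_penrose A = (THE X. A ** X ** A = A \<and> X ** A ** X = X \<and>
       transpose (A ** X) = A ** X \<and> transpose (X ** A) = X ** A)"

definition ediv :: "real \<Rightarrow> real \<Rightarrow> ereal" where
  "ediv a b = (if b = 0 then (if a = 0 then 0 else PInfty) else ereal (a / b))"

definition einverse :: "ereal \<Rightarrow> ereal" where
  "einverse x = (if x = PInfty then 0 else if x = 0 then PInfty else ereal (1 / real_of_ereal x))"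

end

theory Submission
  imports Defs
begin


lemma sym_dot:
  fixes M :: "real^'n^'n"
  assumes "transpose M = M"
  shows "(M *v a) \<bullet> b = a \<bullet> (M *v b)"
proof -
  have "(M *v a) \<bullet> b = (a v* transpose M) \<bullet> b" by simp
  also have "\<dots> = a \<bullet> (transpose M *v b)" by (rule dot_lmul_matrix)
  finally show ?thesis using assms by simp
qed

lemma dot_sym:
  fixes M :: "real^'n^'n"
  assumes "\<And>a b. (M *v a) \<bullet> b = a \<bullet> (M *v b)"
  shows "transpose M = M"
proof -
  have "transpose M *v x = M *v x" for x
  proof -
    have "(transpose M *v x) \<bullet> z = (M *v x) \<bullet> z" for z
      using assms[of x z] dot_lmul_matrix[of x M z] by simp
    then show ?thesis using vector_eq_rdot by blast
  qed
  then show ?thesis using matrix_eq by blast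
qed

lemma mp_unique:
  fixes A :: "real^'n^'m" and X Y :: "real^'m^'n"
  assumes X1: "A ** X ** A = A" and X2: "X ** A ** X = X"
    and X3: "transpose (A ** X) = A ** X" and X4: "transpose (X ** A) = X ** A"
  assumes Y1: "A ** Y ** A = A" and Y2: "Y ** A ** Y = Y"
    and Y3: "transpose (A ** Y) = A ** Y" and Y4: "transpose (Y ** A) = Y ** A"
  shows "X = Y"
proof -
  have "X = X ** (A ** X)" using X2 by (simp add: matrix_mul_assoc)
  also have "\<dots> = X ** transpose (A ** X)" using X3 by simp
  also have "\<dots> = X ** transpose X ** transpose (A ** Y ** A)" using Y1
    by (simp add: matrix_transpose_mul matrix_mul_assoc)
  also have "\<dots> = X ** transpose (A ** X) ** transpose (A ** Y)"
    by (simp add: matrix_transpose_mul matrix_mul_assoc)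
  also have "\<dots> = (X ** A ** X) ** A ** Y" using X3 Y3 by (simp add: matrix_mul_assoc)
  also have "\<dots> = X ** A ** Y" using X2 by simp
  finally have x: "X = X ** A ** Y" .
  have "Y = (Y ** A) ** Y" using Y2 by simp
  also have "\<dots> = transpose (Y ** A) ** Y" using Y4 by simp
  also have "\<dots> = transpose (A ** X ** A) ** transpose Y ** Y" using X1
    by (simp add: matrix_transpose_mul matrix_mul_assoc)
  also have "\<dots> = transpose (X ** A) ** transpose (Y ** A) ** Y"
    by (simp add: matrix_transpose_mul matrix_mul_assoc)
  also have "\<dots> = X ** A ** (Y ** A ** Y)" using X4 Y4 by (simp add: matrix_mul_assoc)
  also have "\<dots> = X ** A ** Y" using Y2 by simp
  finally show ?thesis using x by simp
qed



lemma mp_exists: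
  fixes D :: "real^'n^'n"
  assumes sym: "transpose D = D"
  shows "\<exists>X. D ** X ** D = D \<and> X ** D ** X = X \<and>
       transpose (D ** X) = D ** X \<and> transpose (X ** D) = X ** D"
proof -
  have sd: "(D *v a) \<bullet> b = a \<bullet> (D *v b)" for a b using sym_dot[OF sym] .
  define R where "R = range (\<lambda>x. D *v x)"
  have subR: "subspace R" unfolding R_def
    by (rule linear_subspace_image) (auto simp: subspace_UNIV)
  obtain B where BR: "B \<subseteq> R" and orth: "pairwise orthogonal B"
    and n1: "\<And>x. x \<in> B \<Longrightarrow> norm x = 1" and indB: "independent B" and spB: "span B = R"
    by (rule orthonormal_basis_subspace[OF subR]) blast
  have finB: "finite B" using indB independent_imp_finite by blast
  define P where "P y = (\<Sum>b\<in>B. (b \<bullet> y) *\<^sub>R b)" for y :: "real^'n"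
  have PR: "P y \<in> R" for y
    unfolding P_def spB[symmetric] by (intro span_sum span_mul span_base)
  have Pid: "P r = r" if "r \<in> R" for r
  proof -
    have "(\<Sum>i\<in>B. (r \<bullet> i) *\<^sub>R i) = r"
      by (rule orthonormal_basis_expand[OF orth n1 _ finB]) (use that spB in auto)
    then show ?thesis unfolding P_def by (simp add: inner_commute)
  qed
  have Psym: "P y \<bullet> z = y \<bullet> P z" for y z
    unfolding P_def by (simp add: inner_sum_left inner_sum_right inner_commute mult.commute)
  have perp: "(y - P y) \<bullet> r = 0" if "r \<in> R" for y r
    using Psym[of y r] Pid[OF that] by (simp add: inner_diff_left)
  have ker_perp: "D *v q = 0" if "\<And>r. r \<in> R \<Longrightarrow> q \<bullet> r = 0" for q
  proof -
    have "(D *v q) \<bullet> (D *v q) = q \<bullet> (D *v (D *v q))" by (rule sd)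
    also have "\<dots> = 0" using that[of "D *v (D *v q)"] by (simp add: R_def)
    finally show ?thesis by simp
  qed
  have DP: "D *v P z = D *v z" for z
  proof -
    have "D *v (z - P z) = 0" by (rule ker_perp) (use perp in auto)
    then show ?thesis by (simp add: matrix_vector_mult_diff_distrib)
  qed
  have uniq: "w = w'" if "w \<in> R" "w' \<in> R" "D *v w = D *v w'" for w w'
  proof -
    have k: "D *v (w - w') = 0" using that by (simp add: matrix_vector_mult_diff_distrib)
    have "w - w' \<in> R" using that subR by (simp add: subspace_diff)
    then obtain v where v: "w - w' = D *v v" by (auto simp: R_def)
    have "(w - w') \<bullet> (w - w') = 0" using k sd[of "w - w'" v] v by (simp add: inner_commute)
    then show ?thesis by simp
  qed
  have hex: "\<exists>w. w \<in> R \<and> D *v w = b" if bB: "b \<in> B" for b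
  proof -
    obtain w0 where "b = D *v w0" using bB BR by (auto simp: R_def)
    then show ?thesis using PR[of w0] DP[of w0] by blast
  qed
  define h where "h b = (SOME w. w \<in> R \<and> D *v w = b)" for b
  have hR: "h b \<in> R" and Dh: "D *v h b = b" if "b \<in> B" for b
    using someI_ex[OF hex[OF that]] unfolding h_def by auto
  define g where "g y = (\<Sum>b\<in>B. (b \<bullet> y) *\<^sub>R h b)" for y
  have gR: "g y \<in> R" for y
    unfolding g_def using hR subR by (intro subspace_sum) (auto intro: subspace_mul)
  have Dg: "D *v g y = P y" for y
    unfolding g_def P_def
    by (simp add: linear_sum[OF matrix_vector_mul_linear] matrix_vector_mult_scaleR Dh
       cong: sum.cong)
  have gD: "g (D *v z) = P z" for z
    by (rule uniq[OF gR PR]) (simp add: Dg DP Pid R_def)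
  define X where "X = (\<chi> i j. \<Sum>b\<in>B. h b $ i * b $ j)"
  have Xg: "X *v y = g y" for y
  proof -
    have "(X *v y) $ i = g y $ i" for i
    proof -
      have "(X *v y) $ i = (\<Sum>j\<in>UNIV. \<Sum>b\<in>B. h b $ i * b $ j * y $ j)"
        by (simp add: X_def matrix_vector_mult_def sum_distrib_right)
      also have "\<dots> = (\<Sum>b\<in>B. \<Sum>j\<in>UNIV. h b $ i * b $ j * y $ j)"
        by (rule sum.swap)
      also have "\<dots> = g y $ i"
        by (simp add: g_def inner_vec_def sum_distrib_left sum_distrib_right mult_ac)
      finally show ?thesis .
    qed
    then show ?thesis by (simp add: vec_eq_iff)
  qed
  have c1: "D ** X ** D = D"
    by (simp add: matrix_eq matrix_vector_mul_assoc[symmetric] Xg gD DP)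
  have c2: "X ** D ** X = X"
    by (simp add: matrix_eq matrix_vector_mul_assoc[symmetric] Xg gD Pid gR)
  have c3: "transpose (D ** X) = D ** X"
    by (rule dot_sym) (simp add: matrix_vector_mul_assoc[symmetric] Xg Dg Psym)
  have c4: "transpose (X ** D) = X ** D"
    by (rule dot_sym) (simp add: matrix_vector_mul_assoc[symmetric] Xg gD Psym)
  show ?thesis using c1 c2 c3 c4 by blast
qed



lemma walk_rev:
  assumes "simple_graph E" "walk E xs" shows "walk E (rev xs)"
  unfolding walk_def
proof (intro conjI allI impI)
  show "rev xs \<noteq> []" using assms(2) by (simp add: walk_def)
  fix i assume i: "Suc i < length (rev xs)"
  let ?L = "length xs"
  have w: "E (xs ! (?L - Suc (Suc i))) (xs ! Suc (?L - Suc (Suc i)))"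
    using assms(2) i by (simp add: walk_def)
  have e: "Suc (?L - Suc (Suc i)) = ?L - Suc i" using i by simp
  show "E (rev xs ! i) (rev xs ! Suc i)"
    using w e assms(1) i by (simp add: rev_nth simple_graph_def)
qed

lemma gdist_sym:
  assumes "simple_graph E" shows "gdist E u v = gdist E v u"
proof -
  have "(\<exists>xs. walk E xs \<and> hd xs = u \<and> last xs = v \<and> length xs = Suc k) \<Longrightarrow>
        (\<exists>xs. walk E xs \<and> hd xs = v \<and> last xs = u \<and> length xs = Suc k)" for u v k
  proof -
    assume "\<exists>xs. walk E xs \<and> hd xs = u \<and> last xs = v \<and> length xs = Suc k"
    then obtain xs where xs: "walk E xs" "hd xs = u" "last xs = v" "length xs = Suc k" by blast
    have ne: "xs \<noteq> []" using xs(1) by (simp add: walk_def)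
    show ?thesis
      by (rule exI[of _ "rev xs"]) (use xs ne walk_rev[OF assms xs(1)] in \<open>simp add: hd_rev last_rev\<close>)
  qed
  then have "\<And>k. (\<exists>xs. walk E xs \<and> hd xs = u \<and> last xs = v \<and> length xs = Suc k) =
        (\<exists>xs. walk E xs \<and> hd xs = v \<and> last xs = u \<and> length xs = Suc k)" by blast
  then show ?thesis unfolding gdist_def by simp
qed

lemma dist_sym:
  assumes "simple_graph E" shows "transpose (dist_matrix E) = dist_matrix E"
  using gdist_sym[OF assms] by (simp add: transpose_def dist_matrix_def vec_eq_iff)

lemma ones_nz: "(ones :: real^'n) \<noteq> 0"
  by (simp add: ones_def vec_eq_iff)

lemma the_ones:
  assumes "S = {c *\<^sub>R (ones :: real^'n)}"
  shows "(THE t. S = {t *\<^sub>R ones}) = c"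
proof (rule the_equality)
  show "S = {c *\<^sub>R ones}" by fact
  fix t assume "S = {t *\<^sub>R (ones :: real^'n)}"
  then have "t *\<^sub>R (ones :: real^'n) = c *\<^sub>R ones" using assms by auto
  then show "t = c" using ones_nz scaleR_cancel_right by metis
qed

lemma iota_pot:
  assumes sym: "transpose (dist_matrix E) = dist_matrix E"
    and pot: "dist_matrix E *v x = ones"
  shows "curvature_index E = (if ones \<bullet> x = 0 then PInfty else ereal (1 / (ones \<bullet> x)))"
proof -
  let ?D = "dist_matrix E"
  let ?s = "ones \<bullet> x"
  have K: "ones \<bullet> k = 0" if "?D *v k = 0" for k
    using sym_dot[OF sym, of x k] pot that by simp
  have L: "ones \<bullet> y = t * ?s" if "?D *v y = t *\<^sub>R ones" for y t
  proof -
    have "?D *v (y - t *\<^sub>R x) = 0" using that pot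
      by (simp add: matrix_vector_mult_diff_distrib matrix_vector_mult_scaleR)
    from K[OF this] show ?thesis by (simp add: inner_diff_right)
  qed
  have nexc: "\<not> distance_exceptional E" using pot by (auto simp: distance_exceptional_def)
  show ?thesis
  proof (cases "?s = 0")
    case True
    have "\<not> (\<exists>y. ?D *v y = ones \<and> ones \<bullet> y \<noteq> 0)"
      using L[of _ 1] True by auto
    then show ?thesis using True nexc by (simp add: curvature_index_def)
  next
    case False
    have S: "{?D *v y | y. ones \<bullet> y = 1} \<inter> {c *\<^sub>R ones | c. True} = {(1 / ?s) *\<^sub>R ones}"
    proof (intro equalityI subsetI)
      fix v assume "v \<in> {?D *v y | y. ones \<bullet> y = 1} \<inter> {c *\<^sub>R ones | c. True}"
      then obtain y c where y: "ones \<bullet> y = 1" "v = ?D *v y" "v = c *\<^sub>R ones" by blast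
      have "1 = c * ?s" using L[of y c] y by simp
      then have "c = 1 / ?s" using False by (simp add: field_simps)
      then show "v \<in> {(1 / ?s) *\<^sub>R ones}" using y by simp
    next
      fix v assume "v \<in> {(1 / ?s) *\<^sub>R (ones :: real^'a)}"
      then have v: "v = (1 / ?s) *\<^sub>R ones" by simp
      have "?D *v ((1 / ?s) *\<^sub>R x) = v" "ones \<bullet> ((1 / ?s) *\<^sub>R x) = 1"
        using pot v False by (simp_all add: matrix_vector_mult_scaleR)
      then show "v \<in> {?D *v y | y. ones \<bullet> y = 1} \<inter> {c *\<^sub>R ones | c. True}"
        using v by blast
    qed
    have "\<exists>y. ?D *v y = ones \<and> ones \<bullet> y \<noteq> 0" using pot False by blast
    then show ?thesis using False the_ones[OF S] by (simp add: curvature_index_def)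
  qed
qed

lemma iota_zero:
  assumes exc: "distance_exceptional E"
    and z: "dist_matrix E *v z = 0" "ones \<bullet> z = 1"
  shows "curvature_index E = 0"
proof -
  let ?D = "dist_matrix E"
  have S: "{?D *v y | y. ones \<bullet> y = 1} \<inter> {c *\<^sub>R ones | c. True} = {0 *\<^sub>R ones}"
  proof (intro equalityI subsetI)
    fix v assume "v \<in> {?D *v y | y. ones \<bullet> y = 1} \<inter> {c *\<^sub>R ones | c. True}"
    then obtain y c where y: "ones \<bullet> y = 1" "v = ?D *v y" "v = c *\<^sub>R ones" by blast
    have "c = 0"
    proof (rule ccontr)
      assume "c \<noteq> 0"
      moreover have "?D *v y = c *\<^sub>R ones" using y by simp
      ultimately have "?D *v ((1/c) *\<^sub>R y) = ones" by (simp add: matrix_vector_mult_scaleR)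
      then show False using exc by (auto simp: distance_exceptional_def)
    qed
    then show "v \<in> {0 *\<^sub>R ones}" using y by simp
  next
    fix v assume "v \<in> {0 *\<^sub>R (ones :: real^'a)}"
    then show "v \<in> {?D *v y | y. ones \<bullet> y = 1} \<inter> {c *\<^sub>R ones | c. True}"
      using z by auto
  qed
  show ?thesis using exc the_ones[OF S] by (simp add: curvature_index_def zero_ereal_def)
qed

lemma exc_z:
  assumes sym: "transpose (dist_matrix E) = dist_matrix E"
    and exc: "distance_exceptional E"
  shows "\<exists>z. dist_matrix E *v z = 0 \<and> ones \<bullet> z = 1"
proof -
  let ?D = "dist_matrix E"
  obtain X where X1: "?D ** X ** ?D = ?D" and X3: "transpose (?D ** X) = ?D ** X"
    using mp_exists[OF sym] by blast
  define P where "P y = ?D *v (X *v y)" for y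
  have Psym: "P a \<bullet> b = a \<bullet> P b" for a b
    using sym_dot[OF X3, of a b] by (simp add: P_def matrix_vector_mul_assoc)
  have DXD: "?D *v (X *v (?D *v y)) = ?D *v y" for y
    using X1 by (metis matrix_vector_mul_assoc)
  have Pid: "P (P y) = P y" for y using DXD[of "X *v y"] by (simp add: P_def)
  have DP: "?D *v P y = ?D *v y" for y
  proof -
    have "(?D *v P y) \<bullet> w = (?D *v y) \<bullet> w" for w
    proof -
      have "(?D *v P y) \<bullet> w = P y \<bullet> (?D *v w)" by (rule sym_dot[OF sym])
      also have "\<dots> = y \<bullet> P (?D *v w)" by (rule Psym)
      also have "\<dots> = y \<bullet> (?D *v w)" by (simp add: P_def DXD)
      also have "\<dots> = (?D *v y) \<bullet> w" by (rule sym_dot[OF sym, symmetric])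
      finally show ?thesis .
    qed
    then show ?thesis using vector_eq_rdot by blast
  qed
  define z0 where "z0 = ones - P ones"
  have Dz0: "?D *v z0 = 0" by (simp add: z0_def matrix_vector_mult_diff_distrib DP)
  have "P ones \<bullet> P ones = ones \<bullet> P ones" using Psym[of ones "P ones"] Pid by simp
  then have zz: "z0 \<bullet> z0 = ones \<bullet> z0"
    by (simp add: z0_def inner_diff_left inner_diff_right inner_commute)
  have "ones \<bullet> z0 \<noteq> 0"
  proof
    assume "ones \<bullet> z0 = 0"
    then have "z0 = 0" using zz by simp
    then have "?D *v (X *v ones) = ones" by (simp add: z0_def P_def)
    then show False using exc by (auto simp: distance_exceptional_def)
  qed
  then show ?thesis using Dz0
    by (intro exI[of _ "(1 / (ones \<bullet> z0)) *\<^sub>R z0"]) (simp add: matrix_vector_mult_scaleR)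
qed



lemma parseval:
  fixes u :: "nat \<Rightarrow> real^'n"
  assumes on: "\<forall>i\<in>{1..CARD('n)}. \<forall>j\<in>{1..CARD('n)}. u i \<bullet> u j = (if i = j then 1 else 0)"
  shows "a \<bullet> v = (\<Sum>i\<in>{1..CARD('n)}. (a \<bullet> u i) * (v \<bullet> u i))"
proof -
  let ?I = "{1..CARD('n)}"
  let ?B = "u ` ?I"
  have inj: "inj_on u ?I"
  proof (rule inj_onI)
    fix i j assume "i \<in> ?I" "j \<in> ?I" "u i = u j"
    then show "i = j" using on by (metis zero_neq_one)
  qed
  have orth: "pairwise orthogonal ?B"
    unfolding pairwise_def orthogonal_def using on by auto
  have n1: "norm b = 1" if "b \<in> ?B" for b
    using that on by (auto simp: norm_eq_sqrt_inner)
  have nz: "0 \<notin> ?B" using n1 by fastforce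
  have ind: "independent ?B" by (rule pairwise_orthogonal_independent[OF orth nz])
  have card: "card ?B = CARD('n)" using card_image[OF inj] by simp
  have "UNIV \<subseteq> span ?B"
    by (rule card_ge_dim_independent) (use ind card in auto)
  then have sp: "v \<in> span ?B" by auto
  have "v = (\<Sum>b\<in>?B. (v \<bullet> b) *\<^sub>R b)"
    using orthonormal_basis_expand[OF orth n1 sp] by simp
  also have "\<dots> = (\<Sum>i\<in>?I. (v \<bullet> u i) *\<^sub>R u i)"
    using sum.reindex[OF inj, of "\<lambda>b. (v \<bullet> b) *\<^sub>R b"] by (simp add: o_def)
  finally have "a \<bullet> v = a \<bullet> (\<Sum>i\<in>?I. (v \<bullet> u i) *\<^sub>R u i)" by simp
  then show ?thesis by (simp add: inner_sum_right mult.commute)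
qed



theorem proposition3p3:
  fixes E :: "'n::finite \<Rightarrow> 'n \<Rightarrow> bool"
    and lam :: "nat \<Rightarrow> real" and u :: "nat \<Rightarrow> real^'n"
  assumes "simple_graph E" and "graph_connected E"
  shows "(\<not> distance_exceptional E \<longrightarrow>
           curvature_index E =
             ediv (real CARD('n))
                  (ones \<bullet> (moore_penrose (dist_matrix E) *v (real CARD('n) *\<^sub>R ones)))) \<and>
         ((\<forall>i j. 1 \<le> i \<and> i \<le> j \<and> j \<le> CARD('n) \<longrightarrow> lam i \<le> lam j) \<and>
         (\<forall>i\<in>{1..CARD('n)}. dist_matrix E *v u i = lam i *\<^sub>R u i) \<and>
         (\<forall>i\<in>{1..CARD('n)}. \<forall>j\<in>{1..CARD('n)}. u i \<bullet> u j = (if i = j then 1 else 0))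
         \<longrightarrow> einverse (curvature_index E) =
               (\<Sum>i\<in>{1..CARD('n)}. ediv ((u i \<bullet> ones)\<^sup>2) (lam i)))"
proof (intro conjI impI)
  let ?D = "dist_matrix E"
  let ?M = "moore_penrose ?D"
  let ?n = "real CARD('n)"
  have sym: "transpose ?D = ?D" by (rule dist_sym[OF assms(1)])
  have "\<exists>!X. ?D ** X ** ?D = ?D \<and> X ** ?D ** X = X \<and>
       transpose (?D ** X) = ?D ** X \<and> transpose (X ** ?D) = X ** ?D"
    using mp_exists[OF sym] mp_unique[of ?D] by blast
  then have M: "?D ** ?M ** ?D = ?D"
    unfolding moore_penrose_def by (rule theI'[THEN conjunct1])
  {
    assume nexc: "\<not> distance_exceptional E"
    then obtain x where pot: "?D *v x = ones" by (auto simp: distance_exceptional_def)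
    define y where "y = ?M *v ones"
    have poty: "?D *v y = ones"
      unfolding y_def using M pot by (metis matrix_vector_mul_assoc)
    have np: "?n > 0" by simp
    have eq: "ones \<bullet> (?M *v (?n *\<^sub>R ones)) = ?n * (ones \<bullet> y)"
      by (simp add: y_def matrix_vector_mult_scaleR)
    show "curvature_index E = ediv ?n (ones \<bullet> (?M *v (?n *\<^sub>R ones)))"
      unfolding iota_pot[OF sym poty] eq ediv_def using np by auto
  }
  assume H: "(\<forall>i j. 1 \<le> i \<and> i \<le> j \<and> j \<le> CARD('n) \<longrightarrow> lam i \<le> lam j) \<and>
         (\<forall>i\<in>{1..CARD('n)}. ?D *v u i = lam i *\<^sub>R u i) \<and>
         (\<forall>i\<in>{1..CARD('n)}. \<forall>j\<in>{1..CARD('n)}. u i \<bullet> u j = (if i = j then 1 else 0))"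
  then have eig: "\<And>i. i \<in> {1..CARD('n)} \<Longrightarrow> ?D *v u i = lam i *\<^sub>R u i"
    and on: "\<forall>i\<in>{1..CARD('n)}. \<forall>j\<in>{1..CARD('n)}. u i \<bullet> u j = (if i = j then 1 else 0)"
    by auto
  have lamdot: "lam i * (u i \<bullet> w) = u i \<bullet> (?D *v w)" if "i \<in> {1..CARD('n)}" for i w
    using sym_dot[OF sym, of "u i" w] eig[OF that] by simp
  show "einverse (curvature_index E) = (\<Sum>i\<in>{1..CARD('n)}. ediv ((u i \<bullet> ones)\<^sup>2) (lam i))"
  proof (cases "distance_exceptional E")
    case True
    obtain z where z: "?D *v z = 0" "ones \<bullet> z = 1" using exc_z[OF sym True] by blast
    have L: "einverse (curvature_index E) = PInfty"
      using iota_zero[OF True z] by (simp add: einverse_def)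
    have "(\<Sum>i\<in>{1..CARD('n)}. (ones \<bullet> u i) * (z \<bullet> u i)) = 1"
      using parseval[OF on, of ones z] z by simp
    then obtain i where i: "i \<in> {1..CARD('n)}" "(ones \<bullet> u i) * (z \<bullet> u i) \<noteq> 0"
      by (metis (mono_tags, lifting) sum.neutral zero_neq_one)
    have "lam i * (u i \<bullet> z) = 0" using lamdot[OF i(1), of z] z by simp
    then have l0: "lam i = 0" using i(2) by (simp add: inner_commute)
    have "ediv ((u i \<bullet> ones)\<^sup>2) (lam i) = PInfty"
      using l0 i(2) by (simp add: ediv_def inner_commute)
    then have "(\<Sum>i\<in>{1..CARD('n)}. ediv ((u i \<bullet> ones)\<^sup>2) (lam i)) = PInfty"
      using i(1) by (auto simp: sum_Pinfty)
    then show ?thesis using L by simp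
  next
    case False
    then obtain x where pot: "?D *v x = ones" by (auto simp: distance_exceptional_def)
    have c: "u i \<bullet> ones = lam i * (u i \<bullet> x)" if "i \<in> {1..CARD('n)}" for i
      using lamdot[OF that, of x] pot by simp
    have trm: "ediv ((u i \<bullet> ones)\<^sup>2) (lam i) = ereal ((ones \<bullet> u i) * (x \<bullet> u i))"
      if "i \<in> {1..CARD('n)}" for i
      using c[OF that] by (simp add: ediv_def power2_eq_square inner_commute zero_ereal_def)
    have "(\<Sum>i\<in>{1..CARD('n)}. ediv ((u i \<bullet> ones)\<^sup>2) (lam i))
        = (\<Sum>i\<in>{1..CARD('n)}. ereal ((ones \<bullet> u i) * (x \<bullet> u i)))"
      using trm by (rule sum.cong[OF refl])
    also have "\<dots> = ereal (ones \<bullet> x)"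
      using parseval[OF on, of ones x] by simp
    finally have R: "(\<Sum>i\<in>{1..CARD('n)}. ediv ((u i \<bullet> ones)\<^sup>2) (lam i)) = ereal (ones \<bullet> x)" .
    show ?thesis
      unfolding R iota_pot[OF sym pot] einverse_def by (auto simp: zero_ereal_def)
  qed
qed


end
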